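(* Let $D\subset\mathbb N^n$ be finite, not contained in any coordinate hyperplane, $p$ a prime. Let $U\in E_{D,p}(r)$ and $U'\in E_{D,p}(r')$ be minimal with $\varphi_U(0)=\varphi_{U'}(0)$, and define $V=(v_{\mathbf d})$ by $v_{\mathbf d}=p^ru'_{\mathbf d}+u_{\mathbf d}$. Then $V$ is a minimal element of $E_{D,p}(r+r')$, and its support satisfies $\varphi_V(i)=\varphi_{U'}(i)$ for $0\le i\le r'$ and $\varphi_V(i+r')=\varphi_U(i)$ for $1\le i\le r-1$.
   Context: $s_p$ = base-$p$ digit sum. $E_{D,p}(r)$ = set of $U=(u_{\mathbf d})\in\{0,\dots,p^r-1\}^D$ with $\sum u_{\mathbf d}\mathbf d\equiv0\pmod{p^r-1}$ and all coordinates of $\sum u_{\mathbf d}\mathbf d$ positive; $s_p(U)=\sum s_p(u_{\mathbf d})$; $\delta_p(D)=\frac1{p-1}\min_{r\ge1}\min_{U\in E_{D,p}(r)}s_p(U)/r$; $U\in E_{D,p}(r)$ is minimal if $s_p(U)=(p-1)r\delta_p(D)$. Shift $\delta_r$: $k\mapsto pk\bmod(p^r-1)$ for $k\le p^r-2$, $p^r-1\mapsto p^r-1$, coordinatewise. For $U\in E_{D,p}(r)$, $\varphi_U:\mathbb Z/r\mathbb Z\to\mathbb N_{>0}^n$, $\varphi_U(k)=\frac1{p^r-1}\sum\mathbf d(\delta_r^kU)_{\mathbf d}$ (indices taken modulo $r$). *)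

theory Defs
  imports Complex_Main "HOL-Computational_Algebra.Primes"
begin

text \<open>Points of \<open>\<nat>\<^sup>n\<close> are functions \<open>'n \<Rightarrow> nat\<close> for a finite index type \<open>'n\<close>.
  A tuple \<open>U = (u_d)_{d \<in> D}\<close> is a function \<open>('n \<Rightarrow> nat) \<Rightarrow> nat\<close> vanishing outside D.\<close>

function digit_sum :: "nat \<Rightarrow> nat \<Rightarrow> nat" where
  "digit_sum p k = (if p \<le> 1 \<or> k = 0 then 0 else k mod p + digit_sum p (k div p))"
  by pat_completeness auto
termination by (relation "measure snd") auto

declare digit_sum.simps[simp del]

definition sp_tuple :: "('n \<Rightarrow> nat) set \<Rightarrow> nat \<Rightarrow> (('n \<Rightarrow> nat) \<Rightarrow> nat) \<Rightarrow> nat" where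
  "sp_tuple D p U = (\<Sum>d\<in>D. digit_sum p (U d))"

definition E_set :: "('n \<Rightarrow> nat) set \<Rightarrow> nat \<Rightarrow> nat \<Rightarrow> (('n \<Rightarrow> nat) \<Rightarrow> nat) set" where
  "E_set D p r = {U. (\<forall>d. d \<notin> D \<longrightarrow> U d = 0) \<and> (\<forall>d\<in>D. U d \<le> p ^ r - 1)
      \<and> (\<forall>i. (\<Sum>d\<in>D. U d * d i) mod (p ^ r - 1) = 0)
      \<and> (\<forall>i. (\<Sum>d\<in>D. U d * d i) > 0)}"

definition delta_p :: "('n \<Rightarrow> nat) set \<Rightarrow> nat \<Rightarrow> real" where
  "delta_p D p = (1 / (real p - 1)) *
     Inf {real (sp_tuple D p U) / real r | r U. r \<ge> 1 \<and> U \<in> E_set D p r}"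

definition minimal :: "('n \<Rightarrow> nat) set \<Rightarrow> nat \<Rightarrow> nat \<Rightarrow> (('n \<Rightarrow> nat) \<Rightarrow> nat) \<Rightarrow> bool" where
  "minimal D p r U \<longleftrightarrow> U \<in> E_set D p r \<and>
     real (sp_tuple D p U) = (real p - 1) * real r * delta_p D p"

definition shift :: "nat \<Rightarrow> nat \<Rightarrow> nat \<Rightarrow> nat" where
  "shift p r k = (if k = p ^ r - 1 then k else (p * k) mod (p ^ r - 1))"

definition phi :: "('n \<Rightarrow> nat) set \<Rightarrow> nat \<Rightarrow> nat \<Rightarrow> (('n \<Rightarrow> nat) \<Rightarrow> nat) \<Rightarrow> nat \<Rightarrow> ('n \<Rightarrow> real)" where
  "phi D p r U k = (\<lambda>i. real (\<Sum>d\<in>D. ((shift p r) ^^ (k mod r)) (U d) * d i) / (real p ^ r - 1))"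

end

theory Submission
  imports Defs
begin

lemma ds0: "digit_sum p 0 = 0" by (subst digit_sum.simps) simp

lemma ds_eq: "p \<ge> 2 \<Longrightarrow> digit_sum p n = n mod p + digit_sum p (n div p)"
  by (cases "n = 0") (simp add: ds0, subst digit_sum.simps, auto)

lemma ds_add: "p \<ge> 2 \<Longrightarrow> y < p^r \<Longrightarrow> digit_sum p (p^r * x + y) = digit_sum p x + digit_sum p y"
proof (induction r arbitrary: y)
  case 0 then show ?case by (simp add: digit_sum.simps)
next
  case (Suc r)
  have p0: "p > 0" using Suc by auto
  have m: "(p ^ Suc r * x + y) mod p = y mod p" by (simp add: mod_add_left_eq[symmetric])
  have d: "(p ^ Suc r * x + y) div p = p^r * x + y div p" using p0 by (simp add: mult.assoc)
  have yl: "y div p < p^r" using Suc.prems p0 by (simp add: less_mult_imp_div_less mult.commute)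
  have "digit_sum p (p ^ Suc r * x + y) = y mod p + digit_sum p (p^r * x + y div p)"
    using ds_eq[OF Suc.prems(1), of "p ^ Suc r * x + y"] m d by simp
  also have "\<dots> = y mod p + digit_sum p x + digit_sum p (y div p)" using Suc.IH[OF Suc.prems(1) yl] by simp
  also have "\<dots> = digit_sum p x + digit_sum p y" using ds_eq[OF Suc.prems(1), of y] by simp
  finally show ?case .
qed

lemma rot_step:
  fixes p R i v :: nat
  assumes p: "p \<ge> 2" and iR: "i < R" and v: "v < p^R"
  shows "shift p R ((v mod p^(R-i)) * p^i + v div p^(R-i)) = (v mod p^(R-Suc i)) * p^(Suc i) + v div p^(R - Suc i)"
proof -
  obtain k where k: "R - i = Suc k" using iR by (metis Suc_diff_Suc)
  have k2: "R - Suc i = k" using k by simp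
  have Rk: "R = Suc k + i" using k iR by simp
  define q where "q = v div p^(Suc k)"
  define a where "a = (v div p^k) mod p"
  define m where "m = v mod p^k"
  have p0: "p > 0" using p by simp
  have h1: "v mod p^(Suc k) = p^k * a + m" unfolding a_def m_def
    by (metis mod_mult2_eq power_Suc2)
  have h2: "v div p^k = p*q + a" unfolding q_def a_def
    by (metis div_mult2_eq mult.commute div_mult_mod_eq power_Suc)
  have ql: "q < p^i" unfolding q_def using v Rk p0
    by (simp add: div_less_iff_less_mult power_add ac_simps)
  have ml: "m < p^k" unfolding m_def using p0 by simp
  have al: "a < p" unfolding a_def using p0 by simp
  define w where "w = (p^k * a + m) * p^i + q"
  define X where "X = m * p^(Suc i) + (p*q + a)"
  have lhs: "(v mod p^(R-i)) * p^i + v div p^(R-i) = w" unfolding w_def q_def using k h1 by simp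
  have rhs: "(v mod p^(R-Suc i)) * p^(Suc i) + v div p^(R - Suc i) = X" unfolding X_def m_def using k2 h2 by simp
  have pR: "p^R = p^k * p * p^i" using Rk by (simp add: power_add mult.commute)
  have key: "p * w + a = X + p^R * a" unfolding w_def X_def pR by (simp add: algebra_simps)
  have Xl: "X < p^R"
  proof -
    have "p*q + a < p * p^i"
    proof -
      have "p*q + a \<le> p*(p^i - 1) + (p - 1)" using ql al by (intro add_mono) auto
      also have "\<dots> < p * p^i" using p0 ql by (simp add: algebra_simps diff_mult_distrib2)
      finally show ?thesis .
    qed
    hence "X < m * p^(Suc i) + p^(Suc i)" unfolding X_def by simp
    also have "\<dots> = (m+1) * p^(Suc i)" by simp
    also have "\<dots> \<le> p^k * p^(Suc i)" using ml by (intro mult_right_mono) auto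
    also have "\<dots> = p^R" using pR by simp
    finally show ?thesis .
  qed
  have wl: "w < p^R"
  proof -
    have "w < (p^k * a + m) * p^i + p^i" unfolding w_def using ql by simp
    also have "\<dots> = (p^k * a + m + 1) * p^i" by (simp add: algebra_simps)
    also have "\<dots> \<le> (p^k * a + p^k) * p^i" using ml by (intro mult_right_mono) auto
    also have "\<dots> = p^k * (a+1) * p^i" by (simp add: algebra_simps)
    also have "\<dots> \<le> p^k * p * p^i" using al by (intro mult_right_mono mult_left_mono) auto
    finally show ?thesis using pR by simp
  qed
  define N where "N = p^R - 1"
  have pRN: "p^R = N + 1" unfolding N_def using p0 by simp
  have Npos: "N > 0" unfolding N_def using one_less_power[of p R] p iR by simp
  have cop: "coprime N p"
  proof -
    have "coprime N (N+1)" by simp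
    hence "coprime N (p^R)" using pRN by simp
    thus ?thesis using iR by simp
  qed
  have key2: "p * w = X + N * a" using key pRN by (simp add: algebra_simps)
  have "shift p R w = X"
  proof (cases "w = N")
    case True
    have "p * N = X + N * a" using key2 True by simp
    have "X = N"
    proof (rule ccontr)
      assume "X \<noteq> N"
      hence XN: "X < N" using Xl pRN by simp
      have "N * p = N * a + X" using \<open>p * N = X + N * a\<close> by (simp add: algebra_simps)
      hence "(N * p) mod N = X mod N" by (metis mod_mult_self3 mult.commute)
      hence "X = 0" using XN by simp
      hence "N * p = N * a" using \<open>N * p = N * a + X\<close> by simp
      moreover have "N > 0" using Npos .
      ultimately show False using al by simp
    qed
    then show ?thesis using True unfolding shift_def N_def by simp
  next
    case False
    have "X \<noteq> N"
    proof
      assume XN: "X = N"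
      have "coprime N p" using cop .
      have "N dvd p * w" using key2 XN by simp
      hence "N dvd w" using \<open>coprime N p\<close> by (simp add: coprime_dvd_mult_right_iff)
      moreover have "w < N" using wl pRN False by simp
      ultimately have "w = 0" by (metis dvd_imp_le neq0_conv not_le)
      thus False using key2 XN Npos by simp
    qed
    hence "X < N" using Xl pRN by simp
    have "(p*w) mod N = X" using key2 \<open>X < N\<close> by simp
    then show ?thesis using False unfolding shift_def N_def by simp
  qed
  then show ?thesis using lhs rhs by simp
qed

lemma shift_pow:
  assumes p: "p \<ge> 2" and v: "v < p^R"
  shows "i \<le> R \<Longrightarrow> (shift p R ^^ i) v = (v mod p^(R-i)) * p^i + v div p^(R-i)"
proof (induction i)
  case 0 then show ?case using v by simp
next
  case (Suc i)
  then have "(shift p R ^^ Suc i) v = shift p R ((v mod p^(R-i)) * p^i + v div p^(R-i))" by simp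
  also have "\<dots> = (v mod p^(R-Suc i)) * p^(Suc i) + v div p^(R - Suc i)"
    using rot_step[OF p _ v, of i] Suc.prems by simp
  finally show ?case .
qed

lemma shift_pow_mod:
  assumes p: "p \<ge> 2" and v: "v < p^R" and iR: "i \<le> R" and R: "R \<ge> 1"
  shows "(shift p R ^^ (i mod R)) v = (v mod p^(R-i)) * p^i + v div p^(R-i)"
proof (cases "i = R")
  case True then show ?thesis using v by simp
next
  case False then have "i mod R = i" using iR by simp
  then show ?thesis using shift_pow[OF p v iR] by simp
qed

lemma rot_eq:
  fixes p R i v :: nat
  assumes p: "p \<ge> 2" and iR: "i \<le> R"
  shows "(v mod p^(R-i)) * p^i + v div p^(R-i) + (p^R - 1) * (v div p^(R-i)) = p^i * v"
proof -
  define q where "q = v div p^(R-i)"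
  define m where "m = v mod p^(R-i)"
  have v: "v = q * p^(R-i) + m" unfolding q_def m_def by (rule div_mult_mod_eq[symmetric])
  have pR: "p^R = p^(R-i) * p^i" using iR by (simp add: power_add[symmetric])
  have "p^i * v = q * p^R + m * p^i" using v pR by (simp add: algebra_simps)
  moreover have "(p^R - 1) * q + q = p^R * q"
  proof -
    have "p^R \<noteq> 0" using p by simp
    then obtain M where M: "p^R = Suc M" using not0_implies_Suc by blast
    show ?thesis unfolding M by simp
  qed
  ultimately show ?thesis unfolding q_def[symmetric] m_def[symmetric] by (simp add: algebra_simps)
qed

lemma phi_formula:
  fixes D :: "('n \<Rightarrow> nat) set"
  assumes fin: "finite D" and p: "p \<ge> 2" and R: "R \<ge> 1" and iR: "i \<le> R"
    and W: "\<forall>d\<in>D. W d < p^R"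
  shows "phi D p R W i j = real p ^ i * (real (\<Sum>d\<in>D. W d * d j) / (real p ^ R - 1))
            - real (\<Sum>d\<in>D. (W d div p^(R-i)) * d j)"
proof -
  define N where "N = real p ^ R - 1"
  have Npos: "N > 0" unfolding N_def using one_less_power[of "real p" R] p R by simp
  have pR1: "real (p^R - 1) = N" unfolding N_def using p
    by (simp add: of_nat_diff)
  have each: "real ((shift p R ^^ (i mod R)) (W d)) = real p ^ i * real (W d) - N * real (W d div p^(R-i))"
    if "d \<in> D" for d
  proof -
    have "(shift p R ^^ (i mod R)) (W d) + (p^R - 1) * (W d div p^(R-i)) = p^i * W d"
      using shift_pow_mod[OF p _ iR R, of "W d"] W that rot_eq[OF p iR, of "W d"] by simp
    hence "real ((shift p R ^^ (i mod R)) (W d)) + real (p^R - 1) * real (W d div p^(R-i)) = real p ^ i * real (W d)"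
      by (metis of_nat_add of_nat_mult of_nat_power)
    thus ?thesis using pR1 by simp
  qed
  have "real (\<Sum>d\<in>D. ((shift p R) ^^ (i mod R)) (W d) * d j)
      = (\<Sum>d\<in>D. real p ^ i * (real (W d) * real (d j)) - N * (real (W d div p^(R-i)) * real (d j)))"
    by (simp add: of_nat_sum each algebra_simps cong: sum.cong)
  also have "\<dots> = real p ^ i * real (\<Sum>d\<in>D. W d * d j) - N * real (\<Sum>d\<in>D. (W d div p^(R-i)) * d j)"
    by (simp add: sum_subtractf sum_distrib_left of_nat_sum)
  finally have S: "real (\<Sum>d\<in>D. ((shift p R) ^^ (i mod R)) (W d) * d j) = \<dots>" .
  show ?thesis unfolding phi_def S N_def[symmetric] using Npos by (simp add: field_simps)
qed

theorem lemma2p12: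
  fixes D :: "('n::finite \<Rightarrow> nat) set" and p r r' :: nat
    and U U' :: "('n \<Rightarrow> nat) \<Rightarrow> nat"
  assumes "finite D"
    and "\<forall>i. \<exists>d\<in>D. d i \<noteq> 0"
    and "prime p"
    and "minimal D p r U"
    and "minimal D p r' U'"
    and "phi D p r U 0 = phi D p r' U' 0"
  shows "minimal D p (r + r') (\<lambda>d. p ^ r * U' d + U d)
    \<and> (\<forall>i. i \<le> r' \<longrightarrow> phi D p (r + r') (\<lambda>d. p ^ r * U' d + U d) i = phi D p r' U' i)
    \<and> (\<forall>i. 1 \<le> i \<and> i \<le> r - 1 \<longrightarrow>
          phi D p (r + r') (\<lambda>d. p ^ r * U' d + U d) (i + r') = phi D p r U i)"
proof -
  note fin = assms(1)
  have p: "p \<ge> 2" using assms(3) prime_ge_2_nat by blast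
  have UE: "U \<in> E_set D p r" and U'E: "U' \<in> E_set D p r'"
    using assms(4,5) unfolding minimal_def by auto
  have r1: "r \<ge> 1" if "U \<in> E_set D p r" for r and U :: "('n \<Rightarrow> nat) \<Rightarrow> nat"
  proof (rule ccontr)
    assume "\<not> r \<ge> 1" hence "r = 0" by simp
    hence "\<forall>d\<in>D. U d = 0" using that unfolding E_set_def by auto
    hence "(\<Sum>d\<in>D. U d * d undefined) = 0" by simp
    moreover have "(\<Sum>d\<in>D. U d * d undefined) > 0" using that unfolding E_set_def by blast
    ultimately show False by simp
  qed
  have r: "r \<ge> 1" using r1[OF UE] .
  have r': "r' \<ge> 1" using r1[OF U'E] .
  have lt: "\<forall>d\<in>D. U d < p^r" if "U \<in> E_set D p r" for r and U :: "('n \<Rightarrow> nat) \<Rightarrow> nat"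
  proof
    fix d assume "d \<in> D"
    hence "U d \<le> p^r - 1" using that unfolding E_set_def by auto
    moreover have "p^r \<ge> 1" using p by simp
    ultimately show "U d < p^r" by linarith
  qed
  have Ul: "\<forall>d\<in>D. U d < p^r" using lt[OF UE] .
  have U'l: "\<forall>d\<in>D. U' d < p^r'" using lt[OF U'E] .
  define V where "V = (\<lambda>d. p ^ r * U' d + U d)"
  define R where "R = r + r'"
  define S where "S = (\<lambda>(W :: ('n \<Rightarrow> nat) \<Rightarrow> nat) j. \<Sum>d\<in>D. W d * d j)"
  define a where "a = (\<lambda>j. S U j div (p^r - 1))"
  have SU: "S U j = (p^r - 1) * a j" for j
  proof -
    have "S U j mod (p^r - 1) = 0" using UE unfolding E_set_def S_def by blast
    hence "(p^r - 1) dvd S U j" by (rule mod_0_imp_dvd)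
    thus ?thesis unfolding a_def by (rule dvd_mult_div_cancel[symmetric])
  qed
  have Vl: "\<forall>d\<in>D. V d < p^R"
  proof
    fix d assume d: "d \<in> D"
    have "V d < p^r * U' d + p^r" unfolding V_def using Ul d by simp
    also have "\<dots> = p^r * (U' d + 1)" by (simp add: algebra_simps)
    also have "\<dots> \<le> p^r * p^r'" using U'l d by (intro mult_left_mono) auto
    finally show "V d < p^R" unfolding R_def by (simp add: power_add)
  qed
  have R: "R \<ge> 1" unfolding R_def using r by simp
  have phi0: "phi D p R W 0 j = real (S W j) / (real p ^ R - 1)"
    if "\<forall>d\<in>D. W d < p^R" "R \<ge> 1" for R W j
    using phi_formula[OF fin p that(2) _ that(1), of 0 j] that(1) unfolding S_def by simp
  have Nr: "real (p^r - 1) = real p ^ r - 1" for r using p by (simp add: of_nat_diff)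
  have Npos: "real p ^ r - 1 > 0" if "r \<ge> 1" for r using one_less_power[of "real p" r] p that by simp
  have aU: "real (S U j) / (real p ^ r - 1) = real (a j)" for j
    using SU[of j] Nr[of r] Npos[OF r] by simp
  have aU': "real (S U' j) / (real p ^ r' - 1) = real (a j)" for j
  proof -
    have "phi D p r U 0 j = phi D p r' U' 0 j" using assms(6) by simp
    thus ?thesis using phi0[OF Ul r] phi0[OF U'l r'] aU by simp
  qed
  have SU'r: "real (S U' j) = (real p ^ r' - 1) * real (a j)" for j
    using aU'[of j] Npos[OF r'] by (simp add: field_simps)
  have SV: "S V j = p^r * S U' j + S U j" for j
    unfolding S_def V_def by (simp add: algebra_simps sum.distrib sum_distrib_left)
  have SVr: "real (S V j) = (real p ^ R - 1) * real (a j)" for j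
  proof -
    have "real (S V j) = real p ^ r * ((real p ^ r' - 1) * real (a j)) + (real p^r - 1) * real (a j)"
      using SV[of j] SU'r[of j] SU[of j] Nr[of r] by simp
    also have "\<dots> = (real p ^ R - 1) * real (a j)" unfolding R_def by (simp add: power_add algebra_simps)
    finally show ?thesis .
  qed
  have aV: "real (S V j) / (real p ^ R - 1) = real (a j)" for j
    using SVr[of j] Npos[OF R] by simp
  have SVn: "S V j = (p^R - 1) * a j" for j
  proof -
    have "real (S V j) = real ((p^R - 1) * a j)" using SVr[of j] Nr[of R] by simp
    thus ?thesis by (simp only: of_nat_eq_iff)
  qed
  have VE: "V \<in> E_set D p R"
  proof -
    have "\<forall>d. d \<notin> D \<longrightarrow> V d = 0" using UE U'E unfolding E_set_def V_def by auto
    moreover have "\<forall>d\<in>D. V d \<le> p^R - 1"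
    proof
      fix d assume "d \<in> D" hence "V d < p^R" using Vl by blast
      thus "V d \<le> p^R - 1" by linarith
    qed
    moreover have "\<forall>i. S V i mod (p^R - 1) = 0" using SVn by simp
    moreover have "\<forall>i. S V i > 0"
    proof
      fix i have "S U i > 0" using UE unfolding E_set_def S_def by auto
      thus "S V i > 0" using SV[of i] by simp
    qed
    ultimately show ?thesis unfolding E_set_def S_def by auto
  qed
  have spV: "sp_tuple D p V = sp_tuple D p U' + sp_tuple D p U"
  proof -
    have "sp_tuple D p V = (\<Sum>d\<in>D. digit_sum p (U' d) + digit_sum p (U d))"
      unfolding sp_tuple_def V_def using Ul ds_add[OF p] by (intro sum.cong) auto
    thus ?thesis unfolding sp_tuple_def by (simp add: sum.distrib)
  qed
  have minV: "minimal D p R V"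
    using VE spV assms(4,5) unfolding minimal_def R_def by (simp add: algebra_simps)
  have part2: "phi D p R V i = phi D p r' U' i" if i: "i \<le> r'" for i
  proof
    fix j
    have "(\<Sum>d\<in>D. (V d div p^(R-i)) * d j) = (\<Sum>d\<in>D. (U' d div p^(r'-i)) * d j)"
    proof (intro sum.cong refl)
      fix d assume d: "d \<in> D"
      have ee: "R - i = r + (r' - i)" unfolding R_def using i by simp
      have "V d div p^(R-i) = V d div p^r div p^(r'-i)" unfolding ee
        by (simp add: power_add div_mult2_eq)
      also have "V d div p^r = U' d"
      proof -
        have "U d div p^r = 0" using Ul d by simp
        moreover have "p^r > 0" using p by simp
        ultimately show ?thesis unfolding V_def by (simp add: add.commute)
      qed
      finally show "(V d div p^(R-i)) * d j = (U' d div p^(r'-i)) * d j" by simp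
    qed
    moreover have "phi D p R V i j = real p ^ i * (real (S V j) / (real p ^ R - 1)) - real (\<Sum>d\<in>D. (V d div p^(R-i)) * d j)"
      unfolding S_def using phi_formula[OF fin p R _ Vl, of i j] i unfolding R_def by simp
    moreover have "phi D p r' U' i j = real p ^ i * (real (S U' j) / (real p ^ r' - 1)) - real (\<Sum>d\<in>D. (U' d div p^(r'-i)) * d j)"
      unfolding S_def using phi_formula[OF fin p r' i U'l, of j] by simp
    ultimately show "phi D p R V i j = phi D p r' U' i j" by (simp only: aV aU')
  qed
  have part3: "phi D p R V (i + r') = phi D p r U i" if i: "1 \<le> i" "i \<le> r - 1" for i
  proof
    fix j
    have ir: "i \<le> r" using i by simp
    have "(\<Sum>d\<in>D. (V d div p^(R-(i+r'))) * d j) = (\<Sum>d\<in>D. p^i * (U' d * d j) + (U d div p^(r-i)) * d j)"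
    proof (intro sum.cong refl)
      fix d assume d: "d \<in> D"
      have e: "R - (i+r') = r - i" unfolding R_def by simp
      have pr: "p^r = p^(r-i) * p^i" using ir by (simp add: power_add[symmetric])
      have nz: "p^(r-i) \<noteq> 0" using p by simp
      have "V d = U d + (U' d * p^i) * p^(r-i)" unfolding V_def pr by (simp add: ac_simps)
      hence "V d div p^(r-i) = U' d * p^i + U d div p^(r-i)"
        using div_mult_self1[OF nz, of "U d" "U' d * p^i"] by simp
      hence "V d div p^(r-i) = p^i * U' d + U d div p^(r-i)" by (simp add: mult.commute)
      thus "(V d div p^(R-(i+r'))) * d j = p^i * (U' d * d j) + (U d div p^(r-i)) * d j"
        unfolding e by (simp add: algebra_simps)
    qed
    also have "\<dots> = p^i * S U' j + (\<Sum>d\<in>D. (U d div p^(r-i)) * d j)"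
      unfolding S_def by (simp add: sum.distrib sum_distrib_left)
    finally have T: "real (\<Sum>d\<in>D. (V d div p^(R-(i+r'))) * d j) = real p^i * ((real p ^ r' - 1) * real (a j)) + real (\<Sum>d\<in>D. (U d div p^(r-i)) * d j)"
      using SU'r[of j] by simp
    have "phi D p R V (i + r') j = real p ^ (i+r') * real (a j) - (real p^i * ((real p ^ r' - 1) * real (a j)) + real (\<Sum>d\<in>D. (U d div p^(r-i)) * d j))"
    proof -
      have "phi D p R V (i + r') j = real p ^ (i+r') * (real (S V j) / (real p ^ R - 1)) - real (\<Sum>d\<in>D. (V d div p^(R-(i+r'))) * d j)"
        unfolding S_def using phi_formula[OF fin p R _ Vl, of "i+r'" j] i unfolding R_def by simp
      thus ?thesis by (simp only: aV T)
    qed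
    also have "\<dots> = real p ^ i * real (a j) - real (\<Sum>d\<in>D. (U d div p^(r-i)) * d j)"
      by (simp add: power_add algebra_simps)
    also have "\<dots> = phi D p r U i j"
    proof -
      have "phi D p r U i j = real p ^ i * (real (S U j) / (real p ^ r - 1)) - real (\<Sum>d\<in>D. (U d div p^(r-i)) * d j)"
        unfolding S_def using phi_formula[OF fin p r ir Ul, of j] by simp
      thus ?thesis by (simp only: aU)
    qed
    finally show "phi D p R V (i + r') j = phi D p r U i j" .
  qed
  show ?thesis using minV part2 part3 unfolding V_def R_def by blast
qed

end
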